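(* Let $A=F+H$ on $\mathbb{R}^d$, where $F:\mathbb{R}^d\to\mathbb{R}^d$ is single-valued maximal monotone with $L$-Lipschitz $(p-1)$-th order derivative ($p\geq1$ integer, $L>0$) and $H$ is maximal monotone. Let $\hat\sigma\in(0,1)$, $0<\sigma_l<\sigma_u<1$ with $\sigma:=\hat\sigma+\sigma_u<1$, and $x_0\in\mathbb{R}^d$. Suppose that for every $k\geq0$: $x_k'=\mathcal{P}_{\mathrm{dom}(A)}(x_k)$; $\lambda_{k+1}>0$, $y_{k+1}\in\mathbb{R}^d$ and $u_{k+1}\in(F_{x_k'}+H)(y_{k+1})$ satisfy $\|\lambda_{k+1}u_{k+1}+y_{k+1}-x_k\|\leq\hat\sigma\|y_{k+1}-x_k\|$ and $\frac{\sigma_lp!}{L}\leq\lambda_{k+1}\|y_{k+1}-x_k\|^{p-1}\leq\frac{\sigma_up!}{L}$; $v_{k+1}=F(y_{k+1})+u_{k+1}-F_{x_k'}(y_{k+1})$; and $x_{k+1}=x_k-\lambda_{k+1}v_{k+1}$. Then, with $\theta=\frac{\sigma_lp!}{L}$ and $\epsilon_{k}=0$ for all $k\geq1$, these iterates satisfy, for every $k\geq0$: $v_{k+1}\in A^{\epsilon_{k+1}}(y_{k+1})$ (indeed $v_{k+1}\in A(y_{k+1})$), $\|\lambda_{k+1}v_{k+1}+y_{k+1}-x_k\|^2+2\lambda_{k+1}\epsilon_{k+1}\leq\sigma^2\|y_{k+1}-x_k\|^2$, and $\lambda_{k+1}\|y_{k+1}-x_k\|^{p-1}\geq\theta$; that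 is, they are iterates of the conceptual framework with these parameters.
   Context: $F$ having $L$-Lipschitz $(p-1)$-th order derivative means $\|D^{(p-1)}F(x')-D^{(p-1)}F(x)\|_{\mathrm{op}}\leq L\|x'-x\|$ for all $x,x'$, with $D^{(0)}F=F$. $F_x(u)=\sum_{j=0}^{p-1}\frac{1}{j!}D^{(j)}F(x)[u-x]^j$ is the $(p-1)$-th order Taylor approximation of $F$ at $x$. $\mathcal{P}_{\mathrm{dom}(A)}$ is the Euclidean projection onto $\mathrm{dom}(A)=\{x:Ax\neq\emptyset\}$. The $\epsilon$-enlargement is $A^{\epsilon}(x)=\{v:\langle x-\tilde x,v-\tilde v\rangle\geq-\epsilon\ \forall\tilde x,\forall\tilde v\in A\tilde x\}$. *)

theory Defs
  imports "HOL-Analysis.Analysis"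
begin

definition monotone_op :: "('a::euclidean_space \<Rightarrow> 'a set) \<Rightarrow> bool" where
  "monotone_op A \<longleftrightarrow>
     (\<forall>x y u v. u \<in> A x \<longrightarrow> v \<in> A y \<longrightarrow> inner (x - y) (u - v) \<ge> 0)"

definition maximal_monotone :: "('a::euclidean_space \<Rightarrow> 'a set) \<Rightarrow> bool" where
  "maximal_monotone A \<longleftrightarrow> monotone_op A \<and>
     (\<forall>x u. (\<forall>y v. v \<in> A y \<longrightarrow> inner (x - y) (u - v) \<ge> 0) \<longrightarrow> u \<in> A x)"

definition op_dom :: "('a \<Rightarrow> 'b set) \<Rightarrow> 'a set" where
  "op_dom A = {x. A x \<noteq> {}}"

definition op_plus :: "('a \<Rightarrow> 'a::ab_group_add) \<Rightarrow> ('a \<Rightarrow> 'a set) \<Rightarrow> 'a \<Rightarrow> 'a set" where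
  "op_plus F H x = (\<lambda>h. F x + h) ` H x"

definition eps_enlargement :: "('a::euclidean_space \<Rightarrow> 'a set) \<Rightarrow> real \<Rightarrow> 'a \<Rightarrow> 'a set" where
  "eps_enlargement A \<epsilon> x =
     {v. \<forall>x' v'. v' \<in> A x' \<longrightarrow> inner (x - x') (v - v') \<ge> - \<epsilon>}"

definition is_projection :: "'a::euclidean_space set \<Rightarrow> 'a \<Rightarrow> 'a \<Rightarrow> bool" where
  "is_projection S x x' \<longleftrightarrow> x' \<in> S \<and> (\<forall>z\<in>S. dist x x' \<le> dist x z)"

text \<open>DF j x is the j-th derivative of F at x,
  a j-linear map, represented as a function of the list of its j arguments
  (the first list element is the most recently differentiated direction).
  The predicate says: DF 0 = F, DF (j+1) x is the Frechet derivative of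
  z \<mapsto> DF j z for j < p - 1, and DF (p-1) is L-Lipschitz in operator norm,
  the operator norm of a multilinear map being its supremum over arguments of norm at most 1.\<close>
definition lipschitz_higher_deriv ::
  "('a::euclidean_space \<Rightarrow> 'a) \<Rightarrow> nat \<Rightarrow> real \<Rightarrow> (nat \<Rightarrow> 'a \<Rightarrow> 'a list \<Rightarrow> 'a) \<Rightarrow> bool" where
  "lipschitz_higher_deriv F p L DF \<longleftrightarrow>
     (\<forall>x. DF 0 x [] = F x) \<and>
     (\<forall>j < p - 1. \<forall>hs x. length hs = j \<longrightarrow>
        ((\<lambda>z. DF j z hs) has_derivative (\<lambda>h. DF (Suc j) x (h # hs))) (at x)) \<and>
     (\<forall>x x' hs. length hs = p - 1 \<and> (\<forall>h\<in>set hs. norm h \<le> 1) \<longrightarrow>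
        norm (DF (p - 1) x' hs - DF (p - 1) x hs) \<le> L * norm (x' - x))"

definition taylor_approx ::
  "(nat \<Rightarrow> 'a::euclidean_space \<Rightarrow> 'a list \<Rightarrow> 'a) \<Rightarrow> nat \<Rightarrow> 'a \<Rightarrow> 'a \<Rightarrow> 'a" where
  "taylor_approx DF p x u = (\<Sum>j<p. (1 / fact j) *\<^sub>R DF j x (replicate j (u - x)))"

end

theory Submission
  imports Defs
begin


definition hh :: "'a::euclidean_space \<Rightarrow> 'a \<times> 'a \<Rightarrow> 'a \<Rightarrow> real" where
  "hh x g z = inner (z - fst g) (z - x + snd g)"

definition mm :: "'a::euclidean_space \<Rightarrow> 'a \<times> 'a \<Rightarrow> 'a" where
  "mm x g = (1/2) *\<^sub>R (fst g + x - snd g)"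

lemma hh_ball: "hh x g z = (norm (z - mm x g))^2 - (norm (mm x g - fst g))^2"
  by (simp add: hh_def mm_def power2_norm_eq_inner inner_diff_left inner_diff_right
      inner_add_left inner_add_right inner_commute algebra_simps)

lemma hh_move: "hh x g (z - t *\<^sub>R e) = hh x g z - 2 * t * inner e (z - mm x g) + t^2 * (norm e)^2"
  unfolding power2_norm_eq_inner
  by (simp add: hh_def mm_def inner_diff_left inner_diff_right
      inner_add_left inner_add_right inner_commute algebra_simps power2_eq_square)

lemma continuous_on_Max_img:
  fixes f :: "'g \<Rightarrow> 'x::topological_space \<Rightarrow> real"
  assumes "finite G" "G \<noteq> {}" "\<And>g. g \<in> G \<Longrightarrow> continuous_on S (f g)"
  shows "continuous_on S (\<lambda>z. Max ((\<lambda>g. f g z) ` G))"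
  using assms
proof (induction G rule: finite_ne_induct)
  case (singleton x)
  then show ?case by simp
next
  case (insert g G)
  have "(\<lambda>z. Max ((\<lambda>g. f g z) ` insert g G)) = (\<lambda>z. max (f g z) (Max ((\<lambda>g. f g z) ` G)))"
    using insert by (auto simp: Max_insert)
  moreover have "continuous_on S (\<lambda>z. max (f g z) (Max ((\<lambda>g. f g z) ` G)))"
    by (rule continuous_on_max) (use insert in auto)
  ultimately show ?case by (simp only:)
qed

lemma hull_weights:
  fixes m :: "'b \<Rightarrow> 'a::real_vector"
  assumes "finite A" "y \<in> convex hull (m ` A)"
  shows "\<exists>\<mu>. (\<forall>g\<in>A. 0 \<le> \<mu> g) \<and> sum \<mu> A = 1 \<and> (\<Sum>g\<in>A. \<mu> g *\<^sub>R m g) = y"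
proof -
  let ?Y = "{y. \<exists>\<mu>. (\<forall>g\<in>A. 0 \<le> \<mu> g) \<and> sum \<mu> A = 1 \<and> (\<Sum>g\<in>A. \<mu> g *\<^sub>R m g) = y}"
  have "m ` A \<subseteq> ?Y"
  proof
    fix p assume "p \<in> m ` A"
    then obtain g0 where g0: "g0 \<in> A" "p = m g0" by auto
    show "p \<in> ?Y"
      by (rule CollectI, rule exI[of _ "\<lambda>g. if g = g0 then 1 else 0"])
        (use g0 assms(1) in \<open>auto simp: sum.delta' if_distrib[of "\<lambda>c. c *\<^sub>R _"] cong: if_cong\<close>)
  qed
  moreover have "convex ?Y"
    unfolding convex_def
  proof (intro ballI allI impI)
    fix a b and s t :: real
    assume "a \<in> ?Y" "b \<in> ?Y" "0 \<le> s" "0 \<le> t" "s + t = 1"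
    then obtain \<mu>1 \<mu>2 where m1: "\<forall>g\<in>A. 0 \<le> \<mu>1 g" "sum \<mu>1 A = 1" "(\<Sum>g\<in>A. \<mu>1 g *\<^sub>R m g) = a"
      and m2: "\<forall>g\<in>A. 0 \<le> \<mu>2 g" "sum \<mu>2 A = 1" "(\<Sum>g\<in>A. \<mu>2 g *\<^sub>R m g) = b" by blast
    show "s *\<^sub>R a + t *\<^sub>R b \<in> ?Y"
    proof (rule CollectI, rule exI[of _ "\<lambda>g. s * \<mu>1 g + t * \<mu>2 g"], intro conjI)
      show "\<forall>g\<in>A. 0 \<le> s * \<mu>1 g + t * \<mu>2 g" using m1 m2 \<open>0 \<le> s\<close> \<open>0 \<le> t\<close> by auto
      show "(\<Sum>g\<in>A. s * \<mu>1 g + t * \<mu>2 g) = 1"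
        using m1 m2 \<open>s + t = 1\<close> by (simp add: sum.distrib sum_distrib_left[symmetric])
      show "(\<Sum>g\<in>A. (s * \<mu>1 g + t * \<mu>2 g) *\<^sub>R m g) = s *\<^sub>R a + t *\<^sub>R b"
        using m1 m2 by (simp add: scaleR_add_left sum.distrib flip: scaleR_scaleR scaleR_sum_right)
    qed
  qed
  ultimately have "convex hull (m ` A) \<subseteq> ?Y" by (rule hull_minimal)
  then show ?thesis using assms(2) by blast
qed



lemma weighted_nonpos:
  fixes x z :: "'a::euclidean_space"
  assumes fin: "finite A" and nn: "\<forall>g\<in>A. 0 \<le> \<mu> g" and s1: "sum \<mu> A = 1"
    and mono: "\<forall>g\<in>A. \<forall>g'\<in>A. inner (fst g - fst g') (snd g - snd g') \<ge> 0"
    and z: "z = (\<Sum>g\<in>A. \<mu> g *\<^sub>R mm x g)"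
  shows "(\<Sum>g\<in>A. \<mu> g * hh x g z) \<le> 0"
proof -
  define ab where "ab = (\<Sum>g\<in>A. \<mu> g *\<^sub>R fst g)"
  define cb where "cb = (\<Sum>g\<in>A. \<mu> g *\<^sub>R snd g)"
  define S where "S = (\<Sum>g\<in>A. \<mu> g * inner (fst g) (snd g))"
  have zz: "z = (1/2) *\<^sub>R (ab + x - cb)"
  proof -
    have "z = (\<Sum>g\<in>A. (1/2) *\<^sub>R (\<mu> g *\<^sub>R fst g + \<mu> g *\<^sub>R x - \<mu> g *\<^sub>R snd g))"
      unfolding z mm_def by (simp add: algebra_simps)
    also have "\<dots> = (1/2) *\<^sub>R (ab + (sum \<mu> A) *\<^sub>R x - cb)"
      unfolding ab_def cb_def
      by (simp add: scaleR_sum_right[symmetric] sum.distrib sum_subtractf scaleR_sum_left)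
    finally show ?thesis using s1 by simp
  qed
  have pt: "hh x g z = inner z (z - x) + inner z (snd g) - inner (fst g) (z - x) - inner (fst g) (snd g)" for g
    by (simp add: hh_def inner_diff_left inner_add_right algebra_simps)
  have "(\<Sum>g\<in>A. \<mu> g * hh x g z) = (sum \<mu> A) * inner z (z - x) + inner z cb - inner ab (z - x) - S"
    unfolding pt S_def ab_def cb_def
    by (simp add: algebra_simps sum.distrib sum_subtractf sum_distrib_left sum_distrib_right
        inner_sum_left inner_sum_right)
  also have "\<dots> = inner (z - ab) (z - x + cb) + inner ab cb - S"
    using s1 by (simp add: inner_diff_left inner_add_right algebra_simps)
  also have "z - x + cb = -(z - ab)"
  proof -
    have "(2::real) *\<^sub>R z = ab + x - cb" using zz by simp
    then have "z + z = ab + x - cb" by (simp add: scaleR_2)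
    then show ?thesis by (simp add: algebra_simps)
  qed
  finally have eq0: "(\<Sum>g\<in>A. \<mu> g * hh x g z) = inner (z - ab) (-(z - ab)) + (inner ab cb - S)"
    by simp
  have "inner (z - ab) (-(z - ab)) = - inner (z - ab) (z - ab)" by (rule inner_minus_right)
  with eq0 have eq: "(\<Sum>g\<in>A. \<mu> g * hh x g z) = - inner (z - ab) (z - ab) + (inner ab cb - S)"
    by linarith
  have dbl: "(\<Sum>g\<in>A. \<Sum>g'\<in>A. \<mu> g * \<mu> g' * inner (fst g - fst g') (snd g - snd g')) = 2 * (S - inner ab cb)"
  proof -
    have "(\<Sum>g\<in>A. \<Sum>g'\<in>A. \<mu> g * \<mu> g' * inner (fst g - fst g') (snd g - snd g'))
      = (\<Sum>g\<in>A. \<Sum>g'\<in>A. \<mu> g * \<mu> g' * inner (fst g) (snd g))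
        + (\<Sum>g\<in>A. \<Sum>g'\<in>A. \<mu> g * \<mu> g' * inner (fst g') (snd g'))
        - (\<Sum>g\<in>A. \<Sum>g'\<in>A. \<mu> g * \<mu> g' * inner (fst g) (snd g'))
        - (\<Sum>g\<in>A. \<Sum>g'\<in>A. \<mu> g * \<mu> g' * inner (fst g') (snd g))"
      by (simp add: inner_diff_left inner_diff_right algebra_simps sum.distrib sum_subtractf)
    also have "(\<Sum>g\<in>A. \<Sum>g'\<in>A. \<mu> g * \<mu> g' * inner (fst g) (snd g)) = S"
      unfolding S_def using s1 by (simp add: sum_distrib_left[symmetric] sum_distrib_right[symmetric] mult.commute mult.left_commute)
    also have "(\<Sum>g\<in>A. \<Sum>g'\<in>A. \<mu> g * \<mu> g' * inner (fst g') (snd g')) = S"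
      unfolding S_def using s1 by (simp add: sum_distrib_left[symmetric] sum_distrib_right[symmetric] mult.assoc)
    also have "(\<Sum>g\<in>A. \<Sum>g'\<in>A. \<mu> g * \<mu> g' * inner (fst g) (snd g')) = inner ab cb"
      unfolding ab_def cb_def inner_sum_left
      by (simp only: inner_scaleR_left inner_sum_right inner_scaleR_right sum_distrib_left mult.assoc) (simp add: mult.left_commute)
    also have "(\<Sum>g\<in>A. \<Sum>g'\<in>A. \<mu> g * \<mu> g' * inner (fst g') (snd g))
       = (\<Sum>g'\<in>A. \<Sum>g\<in>A. \<mu> g' * \<mu> g * inner (fst g') (snd g))"
      by (subst sum.swap) (simp add: mult.commute)
    also have "\<dots> = inner ab cb"
      unfolding ab_def cb_def inner_sum_left
      by (simp only: inner_scaleR_left inner_sum_right inner_scaleR_right sum_distrib_left mult.assoc) (simp add: mult.left_commute)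
    finally show ?thesis by simp
  qed
  have "0 \<le> (\<Sum>g\<in>A. \<Sum>g'\<in>A. \<mu> g * \<mu> g' * inner (fst g - fst g') (snd g - snd g'))"
    using nn mono by (intro sum_nonneg mult_nonneg_nonneg) auto
  then have "inner ab cb - S \<le> 0" using dbl by simp
  moreover have "0 \<le> inner (z - ab) (z - ab)" by simp
  ultimately show ?thesis using eq by linarith
qed



lemma minty_fin:
  fixes x :: "'a::euclidean_space"
  assumes fin: "finite G" and ne: "G \<noteq> {}"
    and mono: "\<forall>g\<in>G. \<forall>g'\<in>G. inner (fst g - fst g') (snd g - snd g') \<ge> 0"
  shows "\<exists>z. \<forall>g\<in>G. hh x g z \<le> 0"
proof -
  define K where "K = convex hull (mm x ` G)"
  define \<phi> where "\<phi> z = Max ((\<lambda>g. hh x g z) ` G)" for z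
  have Kc: "compact K" unfolding K_def using fin by (simp add: compact_convex_hull finite_imp_compact)
  have Kne: "K \<noteq> {}" unfolding K_def using ne by simp
  have Kcv: "convex K" unfolding K_def by simp
  have cont_hh: "continuous_on S (hh x g)" for S g
    unfolding hh_def by (intro continuous_intros)
  have cphi: "continuous_on K \<phi>"
  proof -
    have "continuous_on K (\<lambda>z. Max ((\<lambda>g. hh x g z) ` G))"
      by (rule continuous_on_Max_img[where f="\<lambda>g z. hh x g z", OF fin ne cont_hh])
    moreover have "\<phi> = (\<lambda>z. Max ((\<lambda>g. hh x g z) ` G))" by (rule ext) (simp add: \<phi>_def)
    ultimately show ?thesis by simp
  qed
  from continuous_attains_inf[OF Kc Kne cphi]
  obtain z0 where z0K: "z0 \<in> K" and z0min': "\<forall>z\<in>K. \<phi> z0 \<le> \<phi> z" by (elim bexE)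
  have z0min: "\<phi> z0 \<le> \<phi> z" if "z \<in> K" for z using z0min' that by blast
  have hle: "hh x g z \<le> \<phi> z" if "g \<in> G" for g z
    unfolding \<phi>_def using fin that by (intro Max_ge) auto
  define A where "A = {g\<in>G. hh x g z0 = \<phi> z0}"
  have Afin: "finite A" unfolding A_def using fin by simp
  have Ane: "A \<noteq> {}"
  proof -
    have "Max ((\<lambda>g. hh x g z0) ` G) \<in> (\<lambda>g. hh x g z0) ` G"
      by (rule Max_in) (simp_all add: fin ne)
    then obtain g where g: "g \<in> G" "Max ((\<lambda>g. hh x g z0) ` G) = hh x g z0" by (rule imageE)
    then have "g \<in> A" unfolding A_def \<phi>_def by simp
    then show ?thesis by blast
  qed
  have AG: "A \<subseteq> G" unfolding A_def by auto
  define C where "C = convex hull (mm x ` A)"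
  have Cc: "compact C" unfolding C_def using Afin by (simp add: compact_convex_hull finite_imp_compact)
  have Cne: "C \<noteq> {}" unfolding C_def using Ane by simp
  have CK: "C \<subseteq> K" unfolding C_def K_def using AG by (intro hull_mono image_mono)
  have z0C: "z0 \<in> C"
  proof (rule ccontr)
    assume nC: "z0 \<notin> C"
    define q where "q = closest_point C z0"
    have qC: "q \<in> C" unfolding q_def using Cc Cne by (simp add: closest_point_in_set compact_imp_closed)
    have qmin: "\<forall>y\<in>C. dist z0 q \<le> dist z0 y"
      unfolding q_def using closest_point_exists(2)[OF compact_imp_closed[OF Cc] Cne] by blast
    define e where "e = z0 - q"
    have enz: "e \<noteq> 0" using nC qC unfolding e_def by auto
    have dotA: "inner e (mm x g - q) \<le> 0" if "g \<in> A" for g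
      unfolding e_def
      by (rule any_closest_point_dot[OF _ compact_imp_closed[OF Cc] qC _ qmin])
         (use that in \<open>auto simp: C_def hull_inc\<close>)
    have act: "hh x g (z0 - t *\<^sub>R e) < \<phi> z0" if "g \<in> A" "0 < t" "t \<le> 1" for g t
    proof -
      have "inner e (z0 - mm x g) = inner e e - inner e (mm x g - q)"
        unfolding e_def by (simp add: inner_diff_right)
      then have ge: "inner e (z0 - mm x g) \<ge> (norm e)^2"
        using dotA[OF that(1)] by (simp add: power2_norm_eq_inner)
      have ep: "(norm e)^2 > 0" using enz by simp
      have "hh x g (z0 - t *\<^sub>R e) = \<phi> z0 - 2 * t * inner e (z0 - mm x g) + t^2 * (norm e)^2"
        using hh_move[of x g z0 t e] that(1) unfolding A_def by simp
      also have "\<dots> \<le> \<phi> z0 - 2 * t * (norm e)^2 + t^2 * (norm e)^2"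
        using ge that by (simp add: mult_left_mono)
      also have "\<dots> < \<phi> z0"
      proof -
        have "t * t \<le> t * 1" using that by (intro mult_left_mono) auto
        then have "t^2 * (norm e)^2 \<le> t * (norm e)^2" using ep by (simp add: power2_eq_square mult_right_mono)
        moreover have "0 < t * (norm e)^2" using that ep by simp
        ultimately show ?thesis by linarith
      qed
      finally show ?thesis .
    qed
    have ev: "\<forall>\<^sub>F t in at_right (0::real). \<forall>g\<in>G - A. hh x g (z0 - t *\<^sub>R e) < \<phi> z0"
    proof (rule eventually_ball_finite)
      show "finite (G - A)" using fin by simp
      show "\<forall>g\<in>G - A. \<forall>\<^sub>F t in at_right 0. hh x g (z0 - t *\<^sub>R e) < \<phi> z0"
      proof
        fix g assume g: "g \<in> G - A"
        then have lt: "hh x g z0 < \<phi> z0" using hle[of g z0] unfolding A_def by auto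
        have "((\<lambda>t. hh x g (z0 - t *\<^sub>R e)) \<longlongrightarrow> hh x g (z0 - 0 *\<^sub>R e)) (at_right 0)"
          unfolding hh_def by (intro tendsto_intros)
        then have "((\<lambda>t. hh x g (z0 - t *\<^sub>R e)) \<longlongrightarrow> hh x g z0) (at_right 0)" by simp
        then show "\<forall>\<^sub>F t in at_right 0. hh x g (z0 - t *\<^sub>R e) < \<phi> z0"
          using lt by (rule order_tendstoD)
      qed
    qed
    moreover have "\<forall>\<^sub>F t in at_right (0::real). 0 < t \<and> t \<le> 1"
      by (simp add: eventually_at_right_field) (auto intro!: exI[of _ 1])
    ultimately have "\<forall>\<^sub>F t in at_right (0::real). (\<forall>g\<in>G - A. hh x g (z0 - t *\<^sub>R e) < \<phi> z0) \<and> 0 < t \<and> t \<le> 1"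
      by (rule eventually_conj)
    then have "trivial_limit (at_right (0::real)) \<or> (\<exists>t. (\<forall>g\<in>G - A. hh x g (z0 - t *\<^sub>R e) < \<phi> z0) \<and> 0 < t \<and> t \<le> 1)"
      by (rule eventually_happens)
    then obtain t where t: "\<forall>g\<in>G - A. hh x g (z0 - t *\<^sub>R e) < \<phi> z0" "0 < t" "t \<le> 1"
      using trivial_limit_at_right_real by blast
    have all: "\<forall>g\<in>G. hh x g (z0 - t *\<^sub>R e) < \<phi> z0"
      using t act by blast
    have "\<phi> (z0 - t *\<^sub>R e) < \<phi> z0"
      unfolding \<phi>_def[of "z0 - t *\<^sub>R e"] using fin ne all by (subst Max_less_iff) auto
    moreover have "z0 - t *\<^sub>R e \<in> K"
    proof -
      have "z0 - t *\<^sub>R e = (1 - t) *\<^sub>R z0 + t *\<^sub>R q" unfolding e_def by (simp add: algebra_simps)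
      moreover have "q \<in> K" using qC CK by auto
      ultimately show ?thesis using Kcv z0K t by (simp add: convex_def)
    qed
    ultimately show False using z0min[of "z0 - t *\<^sub>R e"] by linarith
  qed
  obtain \<mu> where mu: "\<forall>g\<in>A. 0 \<le> \<mu> g" "sum \<mu> A = 1" "(\<Sum>g\<in>A. \<mu> g *\<^sub>R mm x g) = z0"
    using hull_weights[OF Afin z0C[unfolded C_def]] by blast
  have "(\<Sum>g\<in>A. \<mu> g * hh x g z0) \<le> 0"
    by (rule weighted_nonpos[OF Afin mu(1) mu(2)]) (use mono AG mu(3) in auto)
  moreover have "(\<Sum>g\<in>A. \<mu> g * hh x g z0) = \<phi> z0"
  proof -
    have "(\<Sum>g\<in>A. \<mu> g * hh x g z0) = (\<Sum>g\<in>A. \<mu> g * \<phi> z0)"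
      by (rule sum.cong) (auto simp: A_def)
    also have "\<dots> = sum \<mu> A * \<phi> z0" by (simp add: sum_distrib_right)
    finally show ?thesis using mu(2) by simp
  qed
  ultimately have "\<phi> z0 \<le> 0" by simp
  then have "\<forall>g\<in>G. hh x g z0 \<le> 0" using hle by (meson order_trans)
  then show ?thesis by blast
qed



lemma hh_le_iff: "hh x g z \<le> 0 \<longleftrightarrow> z \<in> cball (mm x g) (norm (mm x g - fst g))"
proof -
  have "hh x g z \<le> 0 \<longleftrightarrow> (norm (z - mm x g))^2 \<le> (norm (mm x g - fst g))^2"
    by (simp add: hh_ball)
  also have "\<dots> \<longleftrightarrow> norm (z - mm x g) \<le> norm (mm x g - fst g)"
    by (meson norm_ge_zero power_mono power2_le_imp_le)
  also have "\<dots> \<longleftrightarrow> z \<in> cball (mm x g) (norm (mm x g - fst g))"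
    by (simp add: dist_norm norm_minus_commute)
  finally show ?thesis .
qed

lemma minty_graph:
  fixes H :: "'a::euclidean_space \<Rightarrow> 'a set"
  assumes mon: "monotone_op H" and gam: "\<gamma> > 0" and b0: "b0 \<in> H a0"
  shows "\<exists>z. \<forall>a b. b \<in> H a \<longrightarrow> hh x (a, \<gamma> *\<^sub>R b) z \<le> 0"
proof -
  define G where "G = {(a, \<gamma> *\<^sub>R b) | a b. b \<in> H a}"
  define g0 where "g0 = (a0, \<gamma> *\<^sub>R b0)"
  define bl where "bl g = cball (mm x g) (norm (mm x g - fst g))" for g
  have g0G: "g0 \<in> G" unfolding G_def g0_def using b0 by blast
  have monoG: "\<forall>g\<in>G. \<forall>g'\<in>G. inner (fst g - fst g') (snd g - snd g') \<ge> 0"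
  proof (intro ballI)
    fix g g' assume "g \<in> G" "g' \<in> G"
    then obtain a b a' b' where gg: "g = (a, \<gamma> *\<^sub>R b)" "b \<in> H a" "g' = (a', \<gamma> *\<^sub>R b')" "b' \<in> H a'"
      unfolding G_def by blast
    have "inner (a - a') (b - b') \<ge> 0" using mon gg unfolding monotone_op_def by blast
    then show "inner (fst g - fst g') (snd g - snd g') \<ge> 0"
      using gg gam by (simp add: scaleR_diff_right[symmetric])
  qed
  have "bl g0 \<inter> (\<Inter>g\<in>G. bl g) \<noteq> {}"
  proof (rule compact_imp_fip_image)
    show "compact (bl g0)" unfolding bl_def by simp
    show "closed (bl g)" for g unfolding bl_def by simp
    fix I' assume I': "finite I'" "I' \<subseteq> G"
    have "finite (insert g0 I')" "insert g0 I' \<noteq> {}" using I' by auto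
    moreover have "\<forall>g\<in>insert g0 I'. \<forall>g'\<in>insert g0 I'. inner (fst g - fst g') (snd g - snd g') \<ge> 0"
      using monoG I' g0G by blast
    ultimately obtain z where z: "\<forall>g\<in>insert g0 I'. hh x g z \<le> 0"
      using minty_fin by blast
    then have "z \<in> bl g0 \<inter> (\<Inter>g\<in>I'. bl g)" unfolding bl_def using hh_le_iff by blast
    then show "bl g0 \<inter> (\<Inter>g\<in>I'. bl g) \<noteq> {}" by blast
  qed
  then obtain z where "z \<in> (\<Inter>g\<in>G. bl g)" by blast
  then have "\<forall>g\<in>G. hh x g z \<le> 0" unfolding bl_def using hh_le_iff by blast
  then show ?thesis unfolding G_def by blast
qed



lemma proj_dot:
  fixes H :: "'a::euclidean_space \<Rightarrow> 'a set"
  assumes mm: "maximal_monotone H"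
    and b0: "b0 \<in> H x'" and b1: "b1 \<in> H y"
    and near: "\<And>z. H z \<noteq> {} \<Longrightarrow> dist x x' \<le> dist x z"
  shows "inner (x - x') (y - x') \<le> 0"
proof (rule ccontr)
  assume "\<not> ?thesis"
  then have dpos: "inner (x - x') (y - x') > 0" by simp
  define \<delta> where "\<delta> = inner (x - x') (y - x')"
  define K where "K = norm (y - x')"
  define B where "B = norm b0 + norm b1"
  define r where "r = norm (x - x')"
  have dp: "\<delta> > 0" using dpos unfolding \<delta>_def by simp
  have K0: "K \<ge> 0" and B0: "B \<ge> 0" unfolding K_def B_def by auto
  define t where "t = min 1 (\<delta> / (K^2 + 1))"
  have Kp: "K^2 + 1 > 0" by (simp add: add_nonneg_pos)
  have t0: "t > 0" "t \<le> 1" unfolding t_def using dp Kp by auto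
  have tK: "t * K^2 \<le> \<delta>"
  proof -
    have "t \<le> \<delta> / (K^2 + 1)" unfolding t_def by simp
    then have "t * (K^2 + 1) \<le> \<delta>" using Kp by (simp add: pos_le_divide_eq)
    then show ?thesis using t0 by (simp add: algebra_simps)
  qed
  define \<gamma> where "\<gamma> = min 1 (t * \<delta> / (B^2 + 2 * B * K + 1))"
  have "0 \<le> B^2 + 2 * B * K" using B0 K0 by simp
  then have den: "B^2 + 2 * B * K + 1 > 0" by linarith
  have g0: "\<gamma> > 0" "\<gamma> \<le> 1" unfolding \<gamma>_def using dp t0 den by auto
  have gB: "\<gamma> * (B^2 + 2 * B * K) < t * \<delta>"
  proof -
    have "\<gamma> \<le> t * \<delta> / (B^2 + 2 * B * K + 1)" unfolding \<gamma>_def by simp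
    then have "\<gamma> * (B^2 + 2 * B * K + 1) \<le> t * \<delta>" using den by (simp add: pos_le_divide_eq)
    then show ?thesis using g0 by (simp add: algebra_simps)
  qed
  have mon: "monotone_op H" using mm unfolding maximal_monotone_def by simp
  obtain z where z: "\<forall>a b. b \<in> H a \<longrightarrow> hh x (a, \<gamma> *\<^sub>R b) z \<le> 0"
    using minty_graph[OF mon g0(1) b0] by blast
  have Hz: "(1/\<gamma>) *\<^sub>R (x - z) \<in> H z"
  proof -
    have "\<forall>a b. b \<in> H a \<longrightarrow> inner (z - a) ((1/\<gamma>) *\<^sub>R (x - z) - b) \<ge> 0"
    proof (intro allI impI)
      fix a b assume "b \<in> H a"
      then have le: "inner (z - a) (z - x + \<gamma> *\<^sub>R b) \<le> 0" using z unfolding hh_def by auto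
      have "(1/\<gamma>) *\<^sub>R (x - z) - b = - (1/\<gamma>) *\<^sub>R (z - x + \<gamma> *\<^sub>R b)"
        using g0 by (simp add: algebra_simps)
      then have "inner (z - a) ((1/\<gamma>) *\<^sub>R (x - z) - b) = - (1/\<gamma>) * inner (z - a) (z - x + \<gamma> *\<^sub>R b)"
        by simp
      then show "inner (z - a) ((1/\<gamma>) *\<^sub>R (x - z) - b) \<ge> 0"
        using le g0 by (simp add: divide_nonpos_pos)
    qed
    then show ?thesis using mm unfolding maximal_monotone_def by blast
  qed
  then have rz: "r \<le> norm (x - z)" using near[of z] unfolding r_def dist_norm by blast
  have E0: "inner (z - x') (z - x + \<gamma> *\<^sub>R b0) \<le> 0" using z b0 unfolding hh_def by auto
  have E1: "inner (z - y) (z - x + \<gamma> *\<^sub>R b1) \<le> 0" using z b1 unfolding hh_def by auto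
  define pt where "pt = x' + t *\<^sub>R (y - x')"
  define s where "s = norm (z - pt)"
  define R where "R = (1 - t) * inner (z - x') b0 + t * inner (z - y) b1"
  have comb: "inner (z - pt) (z - x) + \<gamma> * R \<le> 0"
  proof -
    have "(1 - t) * inner (z - x') (z - x + \<gamma> *\<^sub>R b0) + t * inner (z - y) (z - x + \<gamma> *\<^sub>R b1) \<le> 0"
      using E0 E1 t0 by (simp add: add_nonpos_nonpos mult_nonneg_nonpos)
    moreover have "(1 - t) * inner (z - x') (z - x + \<gamma> *\<^sub>R b0) + t * inner (z - y) (z - x + \<gamma> *\<^sub>R b1)
        = inner (z - pt) (z - x) + \<gamma> * R"
      unfolding pt_def R_def by (simp add: inner_diff_left inner_add_right inner_add_left inner_diff_right algebra_simps)
    ultimately show ?thesis by simp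
  qed
  have Rb: "R \<ge> - ((s + K) * B)"
  proof -
    have n1: "norm (z - x') \<le> s + K"
    proof -
      have eqz: "z - x' = (z - pt) + t *\<^sub>R (y - x')" unfolding pt_def by simp
      have "norm (z - x') \<le> norm (z - pt) + norm (t *\<^sub>R (y - x'))"
        unfolding eqz by (rule norm_triangle_ineq)
      then have "norm (z - x') \<le> s + t * K" unfolding s_def K_def using t0 by simp
      also have "\<dots> \<le> s + K" using t0 K0 by (simp add: mult_left_le_one_le)
      finally show ?thesis .
    qed
    have n2: "norm (z - y) \<le> s + K"
    proof -
      have eqz: "z - y = (z - pt) - (1 - t) *\<^sub>R (y - x')" unfolding pt_def by (simp add: algebra_simps)
      have "norm (z - y) \<le> norm (z - pt) + norm ((1 - t) *\<^sub>R (y - x'))"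
        unfolding eqz by (rule norm_triangle_ineq4)
      then have "norm (z - y) \<le> s + (1 - t) * K" unfolding s_def K_def using t0 by simp
      also have "\<dots> \<le> s + K" using t0 K0 by (simp add: mult_left_le_one_le)
      finally show ?thesis .
    qed
    have i1: "inner (z - x') b0 \<ge> - ((s + K) * norm b0)"
    proof -
      have "\<bar>inner (z - x') b0\<bar> \<le> norm (z - x') * norm b0" by (rule Cauchy_Schwarz_ineq2)
      also have "\<dots> \<le> (s + K) * norm b0" using n1 by (simp add: mult_right_mono)
      finally show ?thesis by linarith
    qed
    have i2: "inner (z - y) b1 \<ge> - ((s + K) * norm b1)"
    proof -
      have "\<bar>inner (z - y) b1\<bar> \<le> norm (z - y) * norm b1" by (rule Cauchy_Schwarz_ineq2)
      also have "\<dots> \<le> (s + K) * norm b1" using n2 by (simp add: mult_right_mono)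
      finally show ?thesis by linarith
    qed
    have sK: "s + K \<ge> 0" unfolding s_def using K0 by simp
    have "(1 - t) * inner (z - x') b0 \<ge> (1 - t) * (- ((s + K) * norm b0))"
      using mult_left_mono[OF i1, of "1 - t"] t0 by simp
    moreover have "(1 - t) * (- ((s + K) * norm b0)) \<ge> - ((s + K) * norm b0)"
      using t0 sK by (simp add: mult_left_le_one_le mult_nonneg_nonneg)
    moreover have "t * inner (z - y) b1 \<ge> t * (- ((s + K) * norm b1))"
      using mult_left_mono[OF i2, of t] t0 by simp
    moreover have "t * (- ((s + K) * norm b1)) \<ge> - ((s + K) * norm b1)"
      using t0 sK by (simp add: mult_left_le_one_le mult_nonneg_nonneg)
    ultimately show ?thesis unfolding R_def B_def by (simp add: algebra_simps)
  qed
  have eq1: "(norm (x - pt))^2 = r^2 - 2 * t * \<delta> + t^2 * K^2"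
  proof -
    have ex: "x - pt = (x - x') - t *\<^sub>R (y - x')" unfolding pt_def by (simp add: algebra_simps)
    show ?thesis unfolding r_def \<delta>_def K_def power2_norm_eq_inner ex
      by (simp add: inner_diff_left inner_diff_right inner_commute algebra_simps power2_eq_square)
  qed
  have eq2: "(norm (x - pt))^2 = (norm (x - z))^2 + s^2 - 2 * inner (z - pt) (z - x)"
  proof -
    have ex: "x - pt = (x - z) + (z - pt)" by simp
    show ?thesis unfolding s_def power2_norm_eq_inner ex
      by (simp add: inner_diff_left inner_diff_right inner_add_left inner_add_right inner_commute algebra_simps)
  qed
  have r2: "r^2 \<le> (norm (x - z))^2" using rz unfolding r_def by (simp add: power_mono)
  have main: "- 2 * t * \<delta> + t^2 * K^2 \<ge> s^2 - 2 * \<gamma> * (s + K) * B"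
  proof -
    have "- 2 * inner (z - pt) (z - x) \<ge> 2 * \<gamma> * R" using comb by linarith
    moreover have "2 * \<gamma> * R \<ge> - 2 * \<gamma> * ((s + K) * B)"
      using mult_left_mono[OF Rb, of "2 * \<gamma>"] g0 by (simp add: algebra_simps)
    ultimately show ?thesis using eq1 eq2 r2 by (simp add: algebra_simps)
  qed
  have sq: "s^2 - 2 * \<gamma> * s * B \<ge> - (\<gamma>^2 * B^2)"
  proof -
    have "0 \<le> (s - \<gamma> * B)^2" by simp
    then show ?thesis by (simp add: power2_eq_square algebra_simps)
  qed
  have gg: "\<gamma>^2 * B^2 \<le> \<gamma> * B^2"
  proof -
    have "\<gamma>^2 \<le> \<gamma>" using g0 by (simp add: power2_eq_square mult_left_le_one_le)
    then show ?thesis by (simp add: mult_right_mono)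
  qed
  have tt: "t^2 * K^2 \<le> t * \<delta>"
    using tK t0 by (simp add: power2_eq_square mult.assoc mult_left_mono)
  have "t * \<delta> \<le> \<gamma> * B^2 + 2 * \<gamma> * K * B"
    using main sq gg tt by (simp add: algebra_simps)
  then show False using gB by (simp add: algebra_simps)
qed



lemma dmon: "((\<lambda>t. a * t ^ Suc j / fact (Suc j)) has_real_derivative a * t ^ j / fact j) (at t)"
proof -
  have "((\<lambda>t. t ^ Suc j) has_real_derivative real (Suc j) * t ^ j) (at t)"
    using DERIV_pow[of "Suc j" t UNIV] by simp
  then have "((\<lambda>t. a * t ^ Suc j / fact (Suc j)) has_real_derivative a * (real (Suc j) * t ^ j) / fact (Suc j)) (at t)"
    by (intro DERIV_cdivide DERIV_cmult)
  moreover have "a * (real (Suc j) * t ^ j) / fact (Suc j) = a * t ^ j / fact j"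
    by (simp add: fact_Suc del: of_nat_Suc)
  ultimately show ?thesis by simp
qed

lemma bound_from_deriv:
  fixes R Q :: "real \<Rightarrow> real" and M :: real and k :: nat
  assumes d: "\<And>t. (R has_real_derivative Q t) (at t)"
    and R0: "R 0 = 0"
    and Qb: "\<And>t. 0 \<le> t \<Longrightarrow> t \<le> 1 \<Longrightarrow> \<bar>Q t\<bar> \<le> M * t ^ k / fact k"
    and t: "0 \<le> t" "t \<le> 1"
  shows "\<bar>R t\<bar> \<le> M * t ^ Suc k / fact (Suc k)"
proof -
  have dP: "((\<lambda>s. M * s ^ Suc k / fact (Suc k)) has_real_derivative M * s ^ k / fact k) (at s)" for s
    by (rule dmon)
  have up: "R t \<le> M * t ^ Suc k / fact (Suc k)"
  proof -
    have "(\<lambda>s. M * s ^ Suc k / fact (Suc k) - R s) 0 \<le> (\<lambda>s. M * s ^ Suc k / fact (Suc k) - R s) t"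
    proof (rule DERIV_nonneg_imp_nondecreasing[OF t(1)])
      fix s assume s: "0 \<le> s" "s \<le> t"
      show "\<exists>y. ((\<lambda>s. M * s ^ Suc k / fact (Suc k) - R s) has_real_derivative y) (at s) \<and> 0 \<le> y"
        using Qb[of s] s t by (intro exI[of _ "M * s ^ k / fact k - Q s"] conjI DERIV_diff dP d) auto
    qed
    then show ?thesis using R0 by simp
  qed
  have lo: "- R t \<le> M * t ^ Suc k / fact (Suc k)"
  proof -
    have "(\<lambda>s. M * s ^ Suc k / fact (Suc k) + R s) 0 \<le> (\<lambda>s. M * s ^ Suc k / fact (Suc k) + R s) t"
    proof (rule DERIV_nonneg_imp_nondecreasing[OF t(1)])
      fix s assume s: "0 \<le> s" "s \<le> t"
      show "\<exists>y. ((\<lambda>s. M * s ^ Suc k / fact (Suc k) + R s) has_real_derivative y) (at s) \<and> 0 \<le> y"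
        using Qb[of s] s t by (intro exI[of _ "M * s ^ k / fact k + Q s"] conjI DERIV_add dP d) auto
    qed
    then show ?thesis using R0 by simp
  qed
  show ?thesis using up lo by linarith
qed

lemma taylor_scalar:
  fixes f :: "nat \<Rightarrow> real \<Rightarrow> real" and n :: nat and M :: real
  assumes deriv: "\<And>i t. i < n \<Longrightarrow> (f i has_real_derivative f (Suc i) t) (at t)"
    and lip: "\<And>t. 0 \<le> t \<Longrightarrow> t \<le> 1 \<Longrightarrow> \<bar>f n t - f n 0\<bar> \<le> M * t"
  shows "\<bar>f 0 1 - (\<Sum>j<Suc n. f j 0 / fact j)\<bar> \<le> M / fact (Suc n)"
proof -
  define R where "R i t = f i t - (\<Sum>j<Suc n - i. f (i + j) 0 * t ^ j / fact j)" for i t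
  have dR: "(R i has_real_derivative R (Suc i) t) (at t)" if "i < n" for i t
  proof -
    have N: "Suc n - i = Suc (Suc n - Suc i)" using that by simp
    have eq: "R i = (\<lambda>t. f i t - (f i 0 + (\<Sum>j<Suc n - Suc i. f (i + Suc j) 0 * t ^ Suc j / fact (Suc j))))"
      unfolding R_def N by (simp add: sum.lessThan_Suc_shift del: sum.lessThan_Suc)
    have "((\<lambda>t. f i t - (f i 0 + (\<Sum>j<Suc n - Suc i. f (i + Suc j) 0 * t ^ Suc j / fact (Suc j))))
        has_real_derivative f (Suc i) t - (0 + (\<Sum>j<Suc n - Suc i. f (i + Suc j) 0 * t ^ j / fact j))) (at t)"
      by (intro DERIV_diff DERIV_add DERIV_sum deriv[OF that] DERIV_const dmon)
    moreover have "(\<Sum>j<Suc n - Suc i. f (i + Suc j) 0 * t ^ j / fact j)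
        = (\<Sum>j<Suc n - Suc i. f (Suc i + j) 0 * t ^ j / fact j)"
      by simp
    ultimately show ?thesis unfolding eq R_def by simp
  qed
  have R0: "R i 0 = 0" if "i \<le> n" for i
  proof -
    have N: "Suc n - i = Suc (n - i)" using that by simp
    show ?thesis unfolding R_def N by (simp add: sum.lessThan_Suc_shift del: sum.lessThan_Suc)
  qed
  have claim: "\<forall>t. 0 \<le> t \<longrightarrow> t \<le> 1 \<longrightarrow> \<bar>R (n - m) t\<bar> \<le> M * t ^ Suc m / fact (Suc m)" if "m \<le> n" for m
    using that
  proof (induction m)
    case 0
    have "R n t = f n t - f n 0" for t unfolding R_def by simp
    then show ?case using lip by simp
  next
    case (Suc m)
    have i: "n - Suc m < n" and i2: "Suc (n - Suc m) = n - m" using Suc.prems by auto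
    show ?case
    proof (intro allI impI)
      fix t :: real assume t: "0 \<le> t" "t \<le> 1"
      show "\<bar>R (n - Suc m) t\<bar> \<le> M * t ^ Suc (Suc m) / fact (Suc (Suc m))"
      proof (rule bound_from_deriv[where Q="R (n - m)"])
        show "(R (n - Suc m) has_real_derivative R (n - m) s) (at s)" for s
          using dR[OF i, of s] i2 by simp
        show "R (n - Suc m) 0 = 0" by (rule R0) simp
        show "\<bar>R (n - m) s\<bar> \<le> M * s ^ Suc m / fact (Suc m)" if "0 \<le> s" "s \<le> 1" for s
          using Suc.IH Suc.prems that by auto
      qed (use t in auto)
    qed
  qed
  have c: "\<forall>t. 0 \<le> t \<longrightarrow> t \<le> 1 \<longrightarrow> \<bar>R 0 t\<bar> \<le> M * t ^ Suc n / fact (Suc n)"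
    using claim[of n] by simp
  have "\<bar>R 0 1\<bar> \<le> M * 1 ^ Suc n / fact (Suc n)" using c[rule_format, of 1] by simp
  then have "\<bar>R 0 1\<bar> \<le> M / fact (Suc n)" by simp
  moreover have "R 0 1 = f 0 1 - (\<Sum>j<Suc n. f j 0 / fact j)" unfolding R_def by simp
  ultimately show ?thesis by simp
qed



lemma hom_DF:
  assumes FD: "lipschitz_higher_deriv F p L DF"
  shows "j < p \<Longrightarrow> DF j z (replicate j (s *\<^sub>R h)) = s ^ j *\<^sub>R DF j z (replicate j h)"
proof (induction j arbitrary: z)
  case 0
  then show ?case by simp
next
  case (Suc j)
  have jp: "j < p - 1" using Suc.prems by simp
  have der: "\<And>hs x. length hs = j \<Longrightarrow> ((\<lambda>z. DF j z hs) has_derivative (\<lambda>h. DF (Suc j) x (h # hs))) (at x)"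
    using FD jp unfolding lipschitz_higher_deriv_def by blast
  have hd1: "((\<lambda>z. DF j z (replicate j (s *\<^sub>R h))) has_derivative (\<lambda>k. DF (Suc j) z (k # replicate j (s *\<^sub>R h)))) (at z)"
    by (rule der) simp
  have hd2: "((\<lambda>z. DF j z (replicate j h)) has_derivative (\<lambda>k. DF (Suc j) z (k # replicate j h))) (at z)"
    by (rule der) simp
  have hd3: "((\<lambda>z. s ^ j *\<^sub>R DF j z (replicate j h)) has_derivative (\<lambda>k. s ^ j *\<^sub>R DF (Suc j) z (k # replicate j h))) (at z)"
    by (rule has_derivative_scaleR_right[OF hd2])
  have feq: "(\<lambda>z. DF j z (replicate j (s *\<^sub>R h))) = (\<lambda>z. s ^ j *\<^sub>R DF j z (replicate j h))"
    using Suc.IH Suc.prems by auto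
  have "(\<lambda>k. DF (Suc j) z (k # replicate j (s *\<^sub>R h))) = (\<lambda>k. s ^ j *\<^sub>R DF (Suc j) z (k # replicate j h))"
    by (rule has_derivative_unique[OF hd1[unfolded feq] hd3])
  then have e1: "DF (Suc j) z ((s *\<^sub>R h) # replicate j (s *\<^sub>R h)) = s ^ j *\<^sub>R DF (Suc j) z ((s *\<^sub>R h) # replicate j h)"
    by (rule fun_cong)
  have bl: "bounded_linear (\<lambda>k. DF (Suc j) z (k # replicate j h))"
    by (rule has_derivative_bounded_linear[OF hd2])
  have e2: "DF (Suc j) z ((s *\<^sub>R h) # replicate j h) = s *\<^sub>R DF (Suc j) z (h # replicate j h)"
    using linear_cmul[OF bounded_linear.linear[OF bl]] by blast
  show ?case using e1 e2 by simp
qed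

lemma taylor_vec:
  fixes F :: "'a::euclidean_space \<Rightarrow> 'a"
  assumes FD: "lipschitz_higher_deriv F p L DF" and p: "p \<ge> 1" and L: "L \<ge> 0"
  shows "norm (F y - taylor_approx DF p x0 y) \<le> L / fact p * norm (y - x0) ^ p"
proof -
  define n where "n = p - 1"
  have pn: "p = Suc n" using p unfolding n_def by simp
  define e where "e = y - x0"
  define c where "c = F y - taylor_approx DF p x0 y"
  define f where "f i t = inner c (DF i (x0 + t *\<^sub>R e) (replicate i e))" for i t
  define M where "M = norm c * L * norm e ^ p"
  have der: "\<And>hs x. length hs = i \<Longrightarrow> ((\<lambda>z. DF i z hs) has_derivative (\<lambda>h. DF (Suc i) x (h # hs))) (at x)"
    if "i < n" for i
    using FD that unfolding lipschitz_higher_deriv_def n_def by blast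
  have deriv: "(f i has_real_derivative f (Suc i) t) (at t)" if "i < n" for i t
  proof -
    have hd: "((\<lambda>z. DF i z (replicate i e)) has_derivative (\<lambda>h. DF (Suc i) (x0 + t *\<^sub>R e) (h # replicate i e))) (at (x0 + t *\<^sub>R e))"
      by (rule der[OF that]) simp
    have line: "((\<lambda>t. x0 + t *\<^sub>R e) has_derivative (\<lambda>s. s *\<^sub>R e)) (at t)"
      by (auto intro!: derivative_eq_intros)
    have comp: "((\<lambda>t. DF i (x0 + t *\<^sub>R e) (replicate i e)) has_derivative (\<lambda>s. DF (Suc i) (x0 + t *\<^sub>R e) ((s *\<^sub>R e) # replicate i e))) (at t)"
      using has_derivative_compose[OF line hd] by simp
    have inn: "(f i has_derivative (\<lambda>s. inner c (DF (Suc i) (x0 + t *\<^sub>R e) ((s *\<^sub>R e) # replicate i e)))) (at t)"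
      unfolding f_def by (rule bounded_linear.has_derivative[OF bounded_linear_inner_right comp])
    have bl: "bounded_linear (\<lambda>h. DF (Suc i) (x0 + t *\<^sub>R e) (h # replicate i e))"
      by (rule has_derivative_bounded_linear[OF hd])
    have "(\<lambda>s. inner c (DF (Suc i) (x0 + t *\<^sub>R e) ((s *\<^sub>R e) # replicate i e))) = (*) (f (Suc i) t)"
    proof
      fix s :: real
      have "DF (Suc i) (x0 + t *\<^sub>R e) ((s *\<^sub>R e) # replicate i e) = s *\<^sub>R DF (Suc i) (x0 + t *\<^sub>R e) (e # replicate i e)"
        using linear_cmul[OF bounded_linear.linear[OF bl]] by blast
      then show "inner c (DF (Suc i) (x0 + t *\<^sub>R e) ((s *\<^sub>R e) # replicate i e)) = f (Suc i) t * s"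
        unfolding f_def by simp
    qed
    then show ?thesis using inn by (simp add: has_field_derivative_def)
  qed
  have lip: "\<bar>f n t - f n 0\<bar> \<le> M * t" if t: "0 \<le> t" "t \<le> 1" for t
  proof (cases "e = 0")
    case True
    then show ?thesis unfolding f_def M_def using pn t by simp
  next
    case False
    define u where "u = (1 / norm e) *\<^sub>R e"
    have eu: "e = norm e *\<^sub>R u" unfolding u_def using False by simp
    have nu: "norm u = 1" unfolding u_def using False by simp
    have hom: "DF n z (replicate n e) = norm e ^ n *\<^sub>R DF n z (replicate n u)" for z
      using hom_DF[OF FD, of n z "norm e" u] eu pn by simp
    have lp: "norm (DF n (x0 + t *\<^sub>R e) (replicate n u) - DF n x0 (replicate n u)) \<le> L * norm (x0 + t *\<^sub>R e - x0)"
    proof -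
      have l3: "\<forall>x x' hs. length hs = p - 1 \<and> (\<forall>h\<in>set hs. norm h \<le> 1) \<longrightarrow>
          norm (DF (p - 1) x' hs - DF (p - 1) x hs) \<le> L * norm (x' - x)"
        using FD unfolding lipschitz_higher_deriv_def by blast
      have "length (replicate n u) = p - 1 \<and> (\<forall>h\<in>set (replicate n u). norm h \<le> 1)"
        using nu unfolding n_def by simp
      then show ?thesis using l3 unfolding n_def by blast
    qed
    have eqf: "f n t - f n 0 = inner c (norm e ^ n *\<^sub>R (DF n (x0 + t *\<^sub>R e) (replicate n u) - DF n x0 (replicate n u)))"
      unfolding f_def using hom by (simp add: inner_diff_right scaleR_diff_right)
    have "\<bar>f n t - f n 0\<bar> \<le> norm c * norm (norm e ^ n *\<^sub>R (DF n (x0 + t *\<^sub>R e) (replicate n u) - DF n x0 (replicate n u)))"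
      unfolding eqf by (rule Cauchy_Schwarz_ineq2)
    also have "\<dots> = norm c * (norm e ^ n * norm (DF n (x0 + t *\<^sub>R e) (replicate n u) - DF n x0 (replicate n u)))"
      by simp
    also have "\<dots> \<le> norm c * (norm e ^ n * (L * (t * norm e)))"
      using lp t by (intro mult_left_mono) auto
    also have "\<dots> = M * t" unfolding M_def pn by (simp add: algebra_simps)
    finally show ?thesis .
  qed
  have ts: "\<bar>f 0 1 - (\<Sum>j<Suc n. f j 0 / fact j)\<bar> \<le> M / fact (Suc n)"
    by (rule taylor_scalar[OF deriv lip]) auto
  have f01: "f 0 1 = inner c (F y)"
    using FD unfolding f_def e_def lipschitz_higher_deriv_def by simp
  have fs: "(\<Sum>j<Suc n. f j 0 / fact j) = inner c (taylor_approx DF p x0 y)"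
    unfolding f_def taylor_approx_def e_def pn[symmetric] inner_sum_right by (rule sum.cong) simp_all
  have "\<bar>inner c c\<bar> \<le> M / fact p"
    using ts f01 fs pn unfolding c_def by (simp add: inner_diff_right inner_diff_left)
  then have sq: "norm c * norm c \<le> norm c * (L / fact p * norm e ^ p)"
    unfolding M_def by (simp add: power2_norm_eq_inner[symmetric] power2_eq_square algebra_simps)
  show ?thesis
  proof (cases "c = 0")
    case True
    then show ?thesis unfolding c_def using L by simp
  next
    case False
    then have "norm c > 0" by simp
    then have "norm c \<le> L / fact p * norm e ^ p" using mult_le_cancel_left_pos sq by blast
    then show ?thesis unfolding c_def e_def .
  qed
qed



theorem proposition4p1:
  fixes F :: "'a::euclidean_space \<Rightarrow> 'a"
    and H :: "'a \<Rightarrow> 'a set"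
    and DF :: "nat \<Rightarrow> 'a \<Rightarrow> 'a list \<Rightarrow> 'a"
    and p :: nat and L \<sigma>hat \<sigma>l \<sigma>u :: real
    and x x' y u v :: "nat \<Rightarrow> 'a" and lam :: "nat \<Rightarrow> real"
  assumes F_mon: "maximal_monotone (\<lambda>z. {F z})"
    and F_deriv: "lipschitz_higher_deriv F p L DF"
    and p: "p \<ge> 1" and L: "L > 0"
    and H_mon: "maximal_monotone H"
    and \<sigma>hat: "0 < \<sigma>hat" "\<sigma>hat < 1"
    and \<sigma>lu: "0 < \<sigma>l" "\<sigma>l < \<sigma>u" "\<sigma>u < 1"
    and \<sigma>: "\<sigma>hat + \<sigma>u < 1"
    and proj: "\<And>k. is_projection (op_dom (op_plus F H)) (x k) (x' k)"
    and lam_pos: "\<And>k. lam (Suc k) > 0"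
    and u_in: "\<And>k. u (Suc k) \<in> op_plus (taylor_approx DF p (x' k)) H (y (Suc k))"
    and err: "\<And>k. norm (lam (Suc k) *\<^sub>R u (Suc k) + y (Suc k) - x k)
                     \<le> \<sigma>hat * norm (y (Suc k) - x k)"
    and step_lo: "\<And>k. \<sigma>l * fact p / L \<le> lam (Suc k) * norm (y (Suc k) - x k) ^ (p - 1)"
    and step_hi: "\<And>k. lam (Suc k) * norm (y (Suc k) - x k) ^ (p - 1) \<le> \<sigma>u * fact p / L"
    and v_def: "\<And>k. v (Suc k) = F (y (Suc k)) + u (Suc k)
                                   - taylor_approx DF p (x' k) (y (Suc k))"
    and x_def: "\<And>k. x (Suc k) = x k - lam (Suc k) *\<^sub>R v (Suc k)"
  shows "let \<theta> = \<sigma>l * fact p / L; \<epsilon> = (\<lambda>k::nat. 0::real); \<sigma>' = \<sigma>hat + \<sigma>u in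
         \<forall>k. v (Suc k) \<in> eps_enlargement (op_plus F H) (\<epsilon> (Suc k)) (y (Suc k))
           \<and> v (Suc k) \<in> op_plus F H (y (Suc k))
           \<and> norm (lam (Suc k) *\<^sub>R v (Suc k) + y (Suc k) - x k) ^ 2
               + 2 * lam (Suc k) * \<epsilon> (Suc k)
               \<le> \<sigma>' ^ 2 * norm (y (Suc k) - x k) ^ 2
           \<and> lam (Suc k) * norm (y (Suc k) - x k) ^ (p - 1) \<ge> \<theta>"
  unfolding Let_def
proof (intro allI conjI)
  fix k
  define T where "T = taylor_approx DF p (x' k)"
  define yk where "yk = y (Suc k)"
  define xk where "xk = x k"
  define lk where "lk = lam (Suc k)"
  obtain h where h: "h \<in> H yk" "u (Suc k) = T yk + h"
    using u_in[of k] unfolding op_plus_def T_def yk_def by blast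
  have vh: "v (Suc k) = F yk + h" using v_def[of k] h unfolding T_def yk_def by simp
  show vin: "v (Suc k) \<in> op_plus F H (y (Suc k))"
    using h(1) vh unfolding op_plus_def yk_def by blast
  have Fm: "inner (a - b) (F a - F b) \<ge> 0" for a b
    using F_mon unfolding maximal_monotone_def monotone_op_def by blast
  have Hm: "monotone_op H" using H_mon unfolding maximal_monotone_def by blast
  show "v (Suc k) \<in> eps_enlargement (op_plus F H) 0 (y (Suc k))"
    unfolding eps_enlargement_def
  proof (intro CollectI allI impI)
    fix x'' v'' assume "v'' \<in> op_plus F H x''"
    then obtain h'' where h'': "h'' \<in> H x''" "v'' = F x'' + h''" unfolding op_plus_def by blast
    have "inner (yk - x'') (h - h'') \<ge> 0" using Hm h(1) h''(1) unfolding monotone_op_def by blast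
    moreover have "inner (yk - x'') (F yk - F x'') \<ge> 0" by (rule Fm)
    moreover have "inner (yk - x'') (v (Suc k) - v'') = inner (yk - x'') (F yk - F x'') + inner (yk - x'') (h - h'')"
      using vh h''(2) by (simp add: inner_diff_right inner_add_right algebra_simps)
    ultimately show "- 0 \<le> inner (y (Suc k) - x'') (v (Suc k) - v'')" unfolding yk_def by simp
  qed
  show "\<sigma>l * fact p / L \<le> lam (Suc k) * norm (y (Suc k) - x k) ^ (p - 1)" by (rule step_lo)
  have dom: "op_dom (op_plus F H) = {a. H a \<noteq> {}}" unfolding op_dom_def op_plus_def by auto
  obtain b0 where b0: "b0 \<in> H (x' k)"
    using proj[of k] unfolding is_projection_def dom by blast
  have near: "dist xk (x' k) \<le> dist xk z" if "H z \<noteq> {}" for z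
    using proj[of k] that unfolding is_projection_def dom xk_def by blast
  have pd: "inner (xk - x' k) (yk - x' k) \<le> 0"
    by (rule proj_dot[OF H_mon b0 h(1) near])
  define N where "N = norm (yk - xk)"
  have N0: "N \<ge> 0" unfolding N_def by simp
  have yx': "norm (yk - x' k) \<le> N"
  proof -
    have eq: "(norm (yk - xk))^2 = (norm (yk - x' k))^2 + (norm (x' k - xk))^2 + 2 * inner (yk - x' k) (x' k - xk)"
      unfolding power2_norm_eq_inner by (simp add: inner_diff_left inner_diff_right inner_commute algebra_simps)
    have ie: "inner (yk - x' k) (x' k - xk) = - inner (xk - x' k) (yk - x' k)"
      by (simp add: inner_commute inner_diff_left inner_diff_right)
    have A: "inner (yk - x' k) (x' k - xk) \<ge> 0" using pd ie by linarith
    have Q: "(norm (x' k - xk))^2 \<ge> 0" by simp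
    have "(norm (yk - x' k))^2 \<le> (norm (yk - xk))^2"
      using eq A Q by linarith
    then have "norm (yk - x' k) \<le> norm (yk - xk)" by (rule power2_le_imp_le) simp
    then show ?thesis unfolding N_def .
  qed
  have tb: "norm (F yk - T yk) \<le> L / fact p * norm (yk - x' k) ^ p"
    unfolding T_def by (rule taylor_vec[OF F_deriv p]) (use L in simp)
  have tb2: "norm (F yk - T yk) \<le> L / fact p * N ^ p"
  proof -
    have "norm (yk - x' k) ^ p \<le> N ^ p" using yx' by (simp add: power_mono)
    moreover have "L / fact p \<ge> 0" using L by simp
    ultimately have "L / fact p * norm (yk - x' k) ^ p \<le> L / fact p * N ^ p" by (rule mult_left_mono)
    then show ?thesis using tb by linarith
  qed
  have lp: "lk > 0" unfolding lk_def by (rule lam_pos)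
  have sh: "lk * N ^ (p - 1) \<le> \<sigma>u * fact p / L" using step_hi[of k] unfolding lk_def N_def yk_def xk_def .
  have key: "lk * (L / fact p * N ^ p) \<le> \<sigma>u * N"
  proof -
    have "N ^ p = N ^ (p - 1) * N" using p power_minus_mult[of p N] by simp
    then have "lk * (L / fact p * N ^ p) = (L / fact p) * (lk * N ^ (p - 1)) * N" by simp
    also have "\<dots> \<le> (L / fact p) * (\<sigma>u * fact p / L) * N"
      using sh L N0 by (intro mult_right_mono mult_left_mono) auto
    also have "\<dots> = \<sigma>u * N" using L by simp
    finally show ?thesis .
  qed
  have decomp: "lk *\<^sub>R v (Suc k) + yk - xk = (lk *\<^sub>R u (Suc k) + yk - xk) + lk *\<^sub>R (F yk - T yk)"
    using vh h(2) by (simp add: algebra_simps)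
  have "norm (lk *\<^sub>R v (Suc k) + yk - xk) \<le> norm (lk *\<^sub>R u (Suc k) + yk - xk) + norm (lk *\<^sub>R (F yk - T yk))"
    unfolding decomp by (rule norm_triangle_ineq)
  also have "\<dots> \<le> \<sigma>hat * N + lk * (L / fact p * N ^ p)"
  proof -
    have "norm (lk *\<^sub>R u (Suc k) + yk - xk) \<le> \<sigma>hat * N"
      using err[of k] unfolding lk_def yk_def xk_def N_def .
    moreover have "norm (lk *\<^sub>R (F yk - T yk)) \<le> lk * (L / fact p * N ^ p)"
      using mult_left_mono[OF tb2, of lk] lp by simp
    ultimately show ?thesis by linarith
  qed
  also have "\<dots> \<le> (\<sigma>hat + \<sigma>u) * N" using key by (simp add: algebra_simps)
  finally have nb: "norm (lk *\<^sub>R v (Suc k) + yk - xk) \<le> (\<sigma>hat + \<sigma>u) * N" .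
  then have "(norm (lk *\<^sub>R v (Suc k) + yk - xk))^2 \<le> ((\<sigma>hat + \<sigma>u) * N)^2"
    by (intro power_mono) auto
  then show "norm (lam (Suc k) *\<^sub>R v (Suc k) + y (Suc k) - x k) ^ 2 + 2 * lam (Suc k) * 0
      \<le> (\<sigma>hat + \<sigma>u) ^ 2 * norm (y (Suc k) - x k) ^ 2"
    unfolding lk_def yk_def xk_def N_def by (simp add: power_mult_distrib)
qed


end
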